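(* Let $m\ge2$, $G=CK(2m-1)$, and let $B$ be a blocker for the simple Hamiltonian paths of $G$ whose $m$ edges are parallel (or equal) to the boundary edges $[0,1],\dots,[m-1,m]$, one per direction. Let $[\alpha,\alpha+1]$ and $[m-\delta-1,m-\delta]$ be the first and last edges of $\langle0,1,\dots,m\rangle$ belonging to $B$, and suppose that $B$ misses exactly one edge $[\alpha+\beta,\alpha+\beta+1]$ of the boundary path $\langle\alpha,\dots,m-\delta\rangle$. Let $B^+=\langle\alpha,\dots,\alpha+\beta\rangle$ and $B^-=\langle\alpha+\beta+1,\dots,m-\delta\rangle$. Let $E^+$ be the set of edges of $B$ parallel to $[0,1],\dots,[\alpha-1,\alpha]$ and $E^-$ the set of edges of $B$ parallel to $[m-\delta,m-\delta+1],\dots,[m-1,m]$. Then each edge of $E^+$ contains an internal vertex of $B^+$, and each edge of $E^-$ contains an internal vertex of $B^-$.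
   Context: $CK(2m-1)$ is the complete convex geometric graph on $2m-1$ points in convex position, labelled clockwise $0,\dots,2m-2$ (elements of $\mathbb{Z}_{2m-1}$), with all segments as edges; boundary edges are $[i,i+1]$. The direction of $[i,j]$ is $i+j\pmod{2m-1}$; edges are parallel if they have the same direction. A simple Hamiltonian path (SHP) is a path through all vertices whose edges pairwise do not cross; a blocker for SHPs is an edge set of smallest possible size sharing an edge with every SHP. *)

theory Defs
  imports Main
begin

text \<open>Vertices of CK(n) are 0,...,n-1 (elements of Z_n), in convex position, clockwise.
  An edge is a two-element set of vertices.\<close>

definition ck_edges :: "nat \<Rightarrow> nat set set" where
  "ck_edges n = {{i, j} | i j. i < n \<and> j < n \<and> i \<noteq> j}"

definition direction :: "nat \<Rightarrow> nat set \<Rightarrow> nat" where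
  "direction n e = (\<Sum>e) mod n"

text \<open>Segments [a,b] and [c,d] between points in convex position cross iff they have
  no common endpoint and exactly one of c, d lies strictly between a and b
  (in the labelling order, which is the cyclic order of the convex position).\<close>
definition strictly_between :: "nat \<Rightarrow> nat \<Rightarrow> nat \<Rightarrow> bool" where
  "strictly_between a b x \<longleftrightarrow> min a b < x \<and> x < max a b"

definition crosses :: "nat \<Rightarrow> nat \<Rightarrow> nat \<Rightarrow> nat \<Rightarrow> bool" where
  "crosses a b c d \<longleftrightarrow> {a, b} \<inter> {c, d} = {} \<and>
     (strictly_between a b c \<noteq> strictly_between a b d)"

definition is_shp :: "nat \<Rightarrow> nat list \<Rightarrow> bool" where
  "is_shp n p \<longleftrightarrow> distinct p \<and> set p = {0..<n} \<and>
     (\<forall>i j. i + 1 < length p \<longrightarrow> j + 1 < length p \<longrightarrow>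
        \<not> crosses (p ! i) (p ! (i + 1)) (p ! j) (p ! (j + 1)))"

definition path_edges :: "nat list \<Rightarrow> nat set set" where
  "path_edges p = {{p ! i, p ! (i + 1)} | i. i + 1 < length p}"

definition hits_all_shps :: "nat \<Rightarrow> nat set set \<Rightarrow> bool" where
  "hits_all_shps n B \<longleftrightarrow> (\<forall>p. is_shp n p \<longrightarrow> path_edges p \<inter> B \<noteq> {})"

definition is_blocker :: "nat \<Rightarrow> nat set set \<Rightarrow> bool" where
  "is_blocker n B \<longleftrightarrow> B \<subseteq> ck_edges n \<and> hits_all_shps n B \<and>
     (\<forall>B'. B' \<subseteq> ck_edges n \<longrightarrow> hits_all_shps n B' \<longrightarrow> card B \<le> card B')"

end

theory Submission
  imports Defs
begin

type_synonym st = "int \<times> int \<times> int"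

definition lab :: "nat \<Rightarrow> int \<Rightarrow> nat" where "lab n y = nat (y mod int n)"

fun nv :: "st \<Rightarrow> bool \<Rightarrow> int" where
  "nv (lo,hi,c) b = (if b then hi+1 else lo-1)"
fun upd :: "st \<Rightarrow> bool \<Rightarrow> st" where
  "upd (lo,hi,c) b = (if b then (lo,hi+1,hi+1) else (lo-1,hi,lo-1))"
fun wv :: "st \<Rightarrow> bool list \<Rightarrow> int list" where
  "wv s [] = []" | "wv s (b#w) = nv s b # wv (upd s b) w"
fun we :: "st \<Rightarrow> bool list \<Rightarrow> (int\<times>int) set" where
  "we s [] = {}" | "we s (b#w) = insert (snd (snd s), nv s b) (we (upd s b) w)"
fun fin :: "st \<Rightarrow> bool list \<Rightarrow> st" where
  "fin s [] = s" | "fin s (b#w) = fin (upd s b) w"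

definition wl :: "st \<Rightarrow> bool list \<Rightarrow> int list" where
  "wl s w = snd (snd s) # wv s w"

definition valid :: "st \<Rightarrow> bool" where
  "valid s \<longleftrightarrow> fst s \<le> fst (snd s) \<and> (snd (snd s) = fst s \<or> snd (snd s) = fst (snd s))"

lemma we_append: "we s (w1 @ w2) = we s w1 \<union> we (fin s w1) w2"
  by (induction w1 arbitrary: s) auto

lemma fin_append: "fin s (w1 @ w2) = fin (fin s w1) w2"
  by (induction w1 arbitrary: s) auto

lemma upd_cur: "snd (snd (upd s b)) = nv s b"
  by (cases s) auto

lemma valid_upd: "valid s \<Longrightarrow> valid (upd s b)"
  by (cases s) (auto simp: valid_def)

lemma upd_lo: "fst (upd s b) \<le> fst s" and upd_hi: "fst (snd s) \<le> fst (snd (upd s b))"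
  by (cases s, auto)+

lemma fin_props: "valid s \<Longrightarrow> valid (fin s w) \<and> fst (fin s w) \<le> fst s \<and> fst (snd s) \<le> fst (snd (fin s w))
   \<and> fst (snd (fin s w)) - fst (fin s w) = fst (snd s) - fst s + int (length w)"
proof (induction w arbitrary: s)
  case Nil then show ?case by simp
next
  case (Cons b w)
  have v: "valid (upd s b)" using Cons.prems valid_upd by blast
  have "fst (snd (upd s b)) - fst (upd s b) = fst (snd s) - fst s + 1"
    by (cases s) auto
  with Cons.IH[OF v] upd_lo[of s b] upd_hi[of s b] show ?case by auto
qed

lemma wv_props: "valid s \<Longrightarrow> distinct (wv s w) \<and> set (wv s w) \<inter> {fst s..fst (snd s)} = {}
   \<and> {fst s..fst (snd s)} \<union> set (wv s w) = {fst (fin s w)..fst (snd (fin s w))}"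
proof (induction w arbitrary: s)
  case Nil then show ?case by simp
next
  case (Cons b w)
  obtain lo hi c where s: "s = (lo,hi,c)" by (cases s)
  have v: "valid (upd s b)" using Cons.prems valid_upd by blast
  note IH = Cons.IH[OF v]
  have lh: "lo \<le> hi" using Cons.prems s by (auto simp: valid_def)
  show ?case
  proof (cases b)
    case True
    then have u: "upd s b = (lo, hi+1, hi+1)" "nv s b = hi+1" using s by auto
    have e: "{lo..hi+1} = insert (hi+1) {lo..hi}" using lh by auto
    have i1: "distinct (wv (lo, hi+1, hi+1) w)" "set (wv (lo, hi+1, hi+1) w) \<inter> {lo..hi+1} = {}"
      "{lo..hi+1} \<union> set (wv (lo, hi+1, hi+1) w) = {fst (fin (lo, hi+1, hi+1) w)..fst (snd (fin (lo, hi+1, hi+1) w))}"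
      using IH u by auto
    have a1: "hi+1 \<notin> set (wv (lo, hi+1, hi+1) w)" using i1(2) lh by auto
    have a2: "set (wv (lo, hi+1, hi+1) w) \<inter> {lo..hi} = {}" using i1(2) by auto
    have a3: "{lo..hi} \<union> insert (hi+1) (set (wv (lo, hi+1, hi+1) w)) = {lo..hi+1} \<union> set (wv (lo, hi+1, hi+1) w)"
      using e by auto
    show ?thesis using i1 a1 a2 a3 s u True by simp
  next
    case False
    then have u: "upd s b = (lo-1, hi, lo-1)" "nv s b = lo-1" using s by auto
    have e: "{lo-1..hi} = insert (lo-1) {lo..hi}" using lh by auto
    have i1: "distinct (wv (lo-1, hi, lo-1) w)" "set (wv (lo-1, hi, lo-1) w) \<inter> {lo-1..hi} = {}"
      "{lo-1..hi} \<union> set (wv (lo-1, hi, lo-1) w) = {fst (fin (lo-1, hi, lo-1) w)..fst (snd (fin (lo-1, hi, lo-1) w))}"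
      using IH u by auto
    have a1: "lo-1 \<notin> set (wv (lo-1, hi, lo-1) w)" using i1(2) lh by auto
    have a2: "set (wv (lo-1, hi, lo-1) w) \<inter> {lo..hi} = {}" using i1(2) by auto
    have a3: "{lo..hi} \<union> insert (lo-1) (set (wv (lo-1, hi, lo-1) w)) = {lo-1..hi} \<union> set (wv (lo-1, hi, lo-1) w)"
      using e by auto
    show ?thesis using i1 a1 a2 a3 s u False by simp
  qed
qed

lemma wl_props: "valid s \<Longrightarrow> fst s = fst (snd s) \<Longrightarrow> distinct (wl s w) \<and> set (wl s w) = {fst (fin s w)..fst (snd (fin s w))}"
  using wv_props[of s w] by (cases s) (auto simp: wl_def valid_def)

lemma we_window: "valid s \<Longrightarrow> (a,b) \<in> we s w \<Longrightarrow>
   fst (fin s w) \<le> a \<and> a \<le> fst (snd (fin s w)) \<and> fst (fin s w) \<le> b \<and> b \<le> fst (snd (fin s w)) \<and> a \<noteq> b"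
proof (induction w arbitrary: s)
  case Nil then show ?case by simp
next
  case (Cons x w)
  have v: "valid (upd s x)" using Cons.prems valid_upd by blast
  have fp: "fst (fin (upd s x) w) \<le> fst (upd s x)" "fst (snd (upd s x)) \<le> fst (snd (fin (upd s x) w))"
    using fin_props[OF v, of w] by auto
  show ?case
  proof (cases "(a,b) \<in> we (upd s x) w")
    case True then show ?thesis using Cons.IH[OF v] by auto
  next
    case False
    then have ab: "a = snd (snd s)" "b = nv s x" using Cons.prems by auto
    obtain lo hi c where s: "s = (lo,hi,c)" by (cases s)
    have "lo \<le> hi" "c = lo \<or> c = hi" using Cons.prems s by (auto simp: valid_def)
    then show ?thesis using fp ab s by (cases x) auto
  qed
qed

definition crZ :: "int \<Rightarrow> int \<Rightarrow> int \<Rightarrow> int \<Rightarrow> bool" where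
  "crZ a b c d \<longleftrightarrow> a \<noteq> c \<and> a \<noteq> d \<and> b \<noteq> c \<and> b \<noteq> d \<and>
     ((min a b < c \<and> c < max a b) \<noteq> (min a b < d \<and> d < max a b))"

lemma crZ_sym1: "crZ a b c d = crZ b a c d"
  unfolding crZ_def by (auto simp: min_def max_def)
lemma crZ_lt: "a < b \<Longrightarrow> crZ a b c d \<longleftrightarrow> a \<noteq> c \<and> a \<noteq> d \<and> b \<noteq> c \<and> b \<noteq> d \<and>
     ((a < c \<and> c < b) \<noteq> (a < d \<and> d < b))"
  unfolding crZ_def by (simp add: min_def max_def)

lemma new_edge_nc:
  assumes "lo \<le> hi" "cur = lo \<or> cur = hi" "x = hi + 1 \<or> x = lo - 1"
    "lo \<le> c" "c \<le> hi" "lo \<le> d" "d \<le> hi"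
  shows "\<not> crZ cur x c d \<and> \<not> crZ c d cur x"
proof -
  have 1: "\<not> crZ cur x c d"
  proof (cases "x = hi + 1")
    case True
    then show ?thesis using assms(1,2,4-7) by (auto simp: crZ_lt)
  next
    case False
    then have "x = lo - 1" using assms(3) by auto
    have "crZ cur x c d = crZ x cur c d" by (rule crZ_sym1)
    also have "\<dots> = False" using assms(1,2,4-7) \<open>x = lo - 1\<close> by (auto simp: crZ_lt)
    finally show ?thesis by simp
  qed
  have 2: "\<not> crZ c d cur x"
  proof (cases "c < d")
    case True
    then show ?thesis using assms by (auto simp: crZ_lt)
  next
    case False
    then have "d < c \<or> c = d" by auto
    then show ?thesis
    proof
      assume dc: "d < c"
      have "crZ c d cur x = crZ d c cur x" by (rule crZ_sym1)
      also have "\<dots> = False" using assms dc by (auto simp: crZ_lt)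
      finally show ?thesis by simp
    qed (auto simp: crZ_def)
  qed
  show ?thesis using 1 2 by auto
qed

lemma we_nc: "valid s \<Longrightarrow> (a,b) \<in> we s w \<Longrightarrow>
   ((c,d) \<in> we s w \<or> (fst s \<le> c \<and> c \<le> fst (snd s) \<and> fst s \<le> d \<and> d \<le> fst (snd s))) \<Longrightarrow>
   \<not> crZ a b c d \<and> \<not> crZ c d a b"
proof (induction w arbitrary: s a b c d)
  case Nil then show ?case by simp
next
  case (Cons x w)
  obtain lo hi cu where s: "s = (lo,hi,cu)" by (cases s)
  have lh: "lo \<le> hi" "cu = lo \<or> cu = hi" using Cons.prems s by (auto simp: valid_def)
  have v: "valid (upd s x)" using Cons.prems valid_upd by blast
  have win: "fst (upd s x) \<le> lo" "hi \<le> fst (snd (upd s x))" using s by (cases x, auto)+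
  have nvw: "fst (upd s x) \<le> nv s x" "nv s x \<le> fst (snd (upd s x))" using s lh by (cases x, auto)+
  have nvx: "nv s x = hi + 1 \<or> nv s x = lo - 1" using s by (cases x) auto
  have we: "we s (x#w) = insert (cu, nv s x) (we (upd s x) w)" using s by simp
  note IH = Cons.IH[OF v]
  have newc: "fst (upd s x) \<le> cu \<and> cu \<le> fst (snd (upd s x))" using win lh by auto
  have crefl: "\<not> crZ p q p q" for p q unfolding crZ_def by auto
  show ?case
  proof (cases "(a,b) = (cu, nv s x)")
    case True
    show ?thesis
    proof (cases "(c,d) = (cu, nv s x)")
      case True with \<open>(a,b) = _\<close> show ?thesis using crefl by auto
    next
      case False
      then have "(c,d) \<in> we (upd s x) w \<or> (lo \<le> c \<and> c \<le> hi \<and> lo \<le> d \<and> d \<le> hi)"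
        using Cons.prems(3) s we by auto
      then show ?thesis
      proof
        assume cd: "(c,d) \<in> we (upd s x) w"
        show ?thesis using IH[OF cd, of a b] True newc nvw by auto
      next
        assume "lo \<le> c \<and> c \<le> hi \<and> lo \<le> d \<and> d \<le> hi"
        then show ?thesis using new_edge_nc[OF lh(1) lh(2) nvx] True by auto
      qed
    qed
  next
    case False
    then have ab: "(a,b) \<in> we (upd s x) w" using Cons.prems(2) we by auto
    have "(c,d) \<in> we (upd s x) w \<or> (fst (upd s x) \<le> c \<and> c \<le> fst (snd (upd s x)) \<and> fst (upd s x) \<le> d \<and> d \<le> fst (snd (upd s x)))"
      using Cons.prems(3) s we win newc nvw by auto
    then show ?thesis using IH[OF ab] by auto
  qed
qed

lemma sucmod: "a < n \<Longrightarrow> Suc a mod n = (if Suc a = n then 0 else Suc a)"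
  by auto

lemma rot1_aux:
  assumes "a < n" "b < n" "c < n" "d < n" "c \<noteq> n - 1" "d \<noteq> n - 1" "b \<noteq> n - 1"
  shows "crosses (Suc a mod n) (Suc b mod n) (Suc c mod n) (Suc d mod n) = crosses a b c d"
proof (cases "a = n - 1")
  case True
  then have e: "Suc a mod n = 0" "Suc b mod n = Suc b" "Suc c mod n = Suc c" "Suc d mod n = Suc d"
    using assms by (auto simp: sucmod)
  show ?thesis unfolding e crosses_def strictly_between_def using assms True
    by (auto simp: min_def max_def)
next
  case False
  then have e: "Suc a mod n = Suc a" "Suc b mod n = Suc b" "Suc c mod n = Suc c" "Suc d mod n = Suc d"
    using assms by (auto simp: sucmod)
  show ?thesis unfolding e crosses_def strictly_between_def using assms
    by (auto simp: min_def max_def)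
qed

lemma crosses_sym1: "crosses a b c d = crosses b a c d"
  unfolding crosses_def strictly_between_def by (auto simp: min_def max_def)
lemma crosses_sym2: "crosses a b c d = crosses a b d c"
  unfolding crosses_def strictly_between_def by auto

lemma rot1_aux2:
  assumes "a < n" "b < n" "c < n" "d < n" "a \<noteq> n - 1" "b \<noteq> n - 1" "d \<noteq> n - 1" "c = n - 1"
  shows "crosses (Suc a mod n) (Suc b mod n) (Suc c mod n) (Suc d mod n) = crosses a b c d"
proof -
  have e: "Suc a mod n = Suc a" "Suc b mod n = Suc b" "Suc c mod n = 0" "Suc d mod n = Suc d"
    using assms by (auto simp: sucmod)
  show ?thesis unfolding e crosses_def strictly_between_def using assms
    by (auto simp: min_def max_def)
qed

lemma rot1:
  assumes "a < n" "b < n" "c < n" "d < n"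
  shows "crosses (Suc a mod n) (Suc b mod n) (Suc c mod n) (Suc d mod n) = crosses a b c d"
proof -
  have inj: "x < n \<Longrightarrow> y < n \<Longrightarrow> Suc x mod n = Suc y mod n \<Longrightarrow> x = y" for x y
    by (auto simp: sucmod split: if_splits)
  have degen: "crosses x y z w = False" if H: "x = y \<or> x = z \<or> x = w \<or> y = z \<or> y = w" for x y z w
  proof -
    consider "x = y" | "x = z \<or> x = w \<or> y = z \<or> y = w" using H by blast
    then show ?thesis
    proof cases
      case 1 then show ?thesis unfolding crosses_def strictly_between_def by auto
    next
      case 2 then show ?thesis unfolding crosses_def by auto
    qed
  qed
  consider (none) "a \<noteq> n-1" "b \<noteq> n-1" "c \<noteq> n-1" "d \<noteq> n-1"
    | (dg) "a = b \<or> a = c \<or> a = d \<or> b = c \<or> b = d"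
    | (A) "a = n-1" "b \<noteq> n-1" "c \<noteq> n-1" "d \<noteq> n-1"
    | (Bq) "b = n-1" "a \<noteq> n-1" "c \<noteq> n-1" "d \<noteq> n-1"
    | (Cq) "c = n-1" "a \<noteq> n-1" "b \<noteq> n-1" "d \<noteq> n-1"
    | (Dq) "d = n-1" "a \<noteq> n-1" "b \<noteq> n-1" "c \<noteq> n-1"
    | (cd) "c = d" by blast
  then show ?thesis
  proof cases
    case none then show ?thesis using rot1_aux assms by blast
  next
    case dg
    then have "Suc a mod n = Suc b mod n \<or> Suc a mod n = Suc c mod n \<or> Suc a mod n = Suc d mod n \<or> Suc b mod n = Suc c mod n \<or> Suc b mod n = Suc d mod n"
      by auto
    then show ?thesis using degen dg by metis
  next
    case A then show ?thesis using rot1_aux assms by blast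
  next
    case Bq then show ?thesis using rot1_aux[of b n a c d] assms crosses_sym1 by metis
  next
    case Cq then show ?thesis using rot1_aux2 assms by blast
  next
    case Dq then show ?thesis using rot1_aux2[of a n b d c] assms crosses_sym2 by metis
  next
    case cd
    then show ?thesis unfolding crosses_def strictly_between_def by auto
  qed
qed

lemma rotk:
  assumes "a < n" "b < n" "c < n" "d < n"
  shows "crosses ((a + k) mod n) ((b + k) mod n) ((c + k) mod n) ((d + k) mod n) = crosses a b c d"
proof (induction k)
  case 0 then show ?case using assms by simp
next
  case (Suc k)
  have n0: "n > 0" using assms by auto
  have "(x + Suc k) mod n = Suc ((x + k) mod n) mod n" for x by (simp add: mod_Suc_eq)
  then show ?case using Suc rot1[of "(a+k) mod n" n "(b+k) mod n" "(c+k) mod n" "(d+k) mod n"] n0 by simp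
qed

lemma crZ_trans: "crZ (a+t) (b+t) (c+t) (d+t) = crZ a b c d"
  unfolding crZ_def by (auto simp: min_def max_def)

lemma crosses_int: "crosses x y z w = crZ (int x) (int y) (int z) (int w)"
  unfolding crosses_def strictly_between_def crZ_def by (auto simp: min_def max_def)

lemma lab_shift:
  assumes n: "n > 0" and a: "w0 \<le> a" "a \<le> w0 + int n - 1"
  shows "lab n a = (nat (a - w0) + nat (w0 mod int n)) mod n"
proof -
  have e1: "int (nat (a - w0)) = a - w0" using a by simp
  have e2: "int (nat (w0 mod int n)) = w0 mod int n" using n by simp
  have "(w0 mod int n + (a - w0)) mod int n = a mod int n" by (simp add: mod_add_left_eq)
  then have "a mod int n = (int (nat (a - w0)) + int (nat (w0 mod int n))) mod int n"
    unfolding e1 e2 by (simp add: add.commute)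
  then have "a mod int n = int ((nat (a - w0) + nat (w0 mod int n)) mod n)"
    by (simp add: zmod_int)
  then show ?thesis unfolding lab_def by simp
qed

lemma transfer:
  assumes n: "n > 0" and
    "w0 \<le> a" "a \<le> w0 + int n - 1" "w0 \<le> b" "b \<le> w0 + int n - 1"
    "w0 \<le> c" "c \<le> w0 + int n - 1" "w0 \<le> d" "d \<le> w0 + int n - 1"
  shows "crosses (lab n a) (lab n b) (lab n c) (lab n d) = crZ a b c d"
proof -
  let ?k = "nat (w0 mod int n)"
  have "crosses (lab n a) (lab n b) (lab n c) (lab n d)
      = crosses ((nat (a - w0) + ?k) mod n) ((nat (b - w0) + ?k) mod n) ((nat (c - w0) + ?k) mod n) ((nat (d - w0) + ?k) mod n)"
    using assms lab_shift by simp
  also have "\<dots> = crosses (nat (a - w0)) (nat (b - w0)) (nat (c - w0)) (nat (d - w0))"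
    by (rule rotk) (use assms in auto)
  also have "\<dots> = crZ (a - w0) (b - w0) (c - w0) (d - w0)"
    using assms by (simp add: crosses_int)
  also have "\<dots> = crZ a b c d" using crZ_trans[of a "-w0" b c d] by simp
  finally show ?thesis .
qed

lemma lab_inj: "n > 0 \<Longrightarrow> inj_on (lab n) {w0..w0 + int n - 1}"
proof (rule inj_onI)
  fix x y assume n: "n > 0" and x: "x \<in> {w0..w0 + int n - 1}" and y: "y \<in> {w0..w0 + int n - 1}"
    and e: "lab n x = lab n y"
  have "x mod int n = y mod int n" using e n unfolding lab_def by (simp add: eq_nat_nat_iff)
  then have "int n dvd (x - y)" by (simp add: mod_eq_dvd_iff)
  then obtain q where q: "x - y = int n * q" by (auto elim: dvdE)
  have "\<bar>x - y\<bar> < int n" using x y by auto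
  then have "q = 0" using q n
    by (metis abs_mult abs_of_nat less_irrefl mult.right_neutral mult_le_cancel_left_pos of_nat_0_less_iff zero_less_abs_iff abs_ge_zero int_one_le_iff_zero_less linorder_not_less)
  then show "x = y" using q by simp
qed

lemma lab_img: assumes n: "n > 0" shows "lab n ` {w0..w0 + int n - 1} = {0..<n}"
proof -
  have sub: "lab n ` {w0..w0 + int n - 1} \<subseteq> {0..<n}"
    using n by (auto simp: lab_def nat_less_iff)
  have "card (lab n ` {w0..w0 + int n - 1}) = card {w0..w0 + int n - 1}"
    using card_image[OF lab_inj[OF n]] .
  also have "\<dots> = n" by simp
  finally show ?thesis using sub by (simp add: card_subset_eq)
qed

lemma length_wv: "length (wv s w) = length w"
  by (induction w arbitrary: s) auto

lemma wl_Cons: "wl s (b # w) = snd (snd s) # wl (upd s b) w"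
  by (simp add: wl_def upd_cur)

lemma wl_nth_edge: "Suc i < length (wl s w) \<Longrightarrow> (wl s w ! i, wl s w ! Suc i) \<in> we s w"
proof (induction w arbitrary: s i)
  case Nil then show ?case by (simp add: wl_def)
next
  case (Cons b w)
  show ?case
  proof (cases i)
    case 0 then show ?thesis by (simp add: wl_def)
  next
    case (Suc i')
    have "Suc i' < length (wl (upd s b) w)" using Cons.prems Suc by (simp add: wl_Cons)
    then show ?thesis using Cons.IH Suc by (simp add: wl_Cons)
  qed
qed

theorem walk_shp:
  assumes n: "n > 0" and len: "length w = n - 1"
  shows "is_shp n (map (lab n) (wl (v,v,v) w))"
    and "\<And>e. e \<in> path_edges (map (lab n) (wl (v,v,v) w)) \<Longrightarrow> \<exists>a b. (a,b) \<in> we (v,v,v) w \<and> e = {lab n a, lab n b}"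
proof -
  let ?s = "(v,v,v)"
  have vs: "valid ?s" by (simp add: valid_def)
  obtain lo hi c where f: "fin ?s w = (lo,hi,c)" by (cases "fin ?s w")
  have hl: "hi - lo = int n - 1" using fin_props[OF vs, of w] f len n by auto
  have W: "{lo..hi} = {lo..lo + int n - 1}" using hl by auto
  have wlp: "distinct (wl ?s w)" "set (wl ?s w) = {lo..hi}" using wl_props[OF vs, of w] f by auto
  have lenl: "length (wl ?s w) = n" using len n by (simp add: wl_def length_wv)
  have d: "distinct (map (lab n) (wl ?s w))"
    using wlp lab_inj[OF n, of lo] W by (simp add: distinct_map)
  have st: "set (map (lab n) (wl ?s w)) = {0..<n}"
    using wlp lab_img[OF n, of lo] W by simp
  have edgewin: "(a,b) \<in> we ?s w \<Longrightarrow> lo \<le> a \<and> a \<le> lo + int n - 1 \<and> lo \<le> b \<and> b \<le> lo + int n - 1" for a b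
    using we_window[OF vs, of a b w] f hl by auto
  have nc: "\<not> crosses (p ! i) (p ! (i + 1)) (p ! j) (p ! (j + 1))"
    if p: "p = map (lab n) (wl ?s w)" and i: "i + 1 < length p" and j: "j + 1 < length p" for p i j
  proof -
    let ?q = "wl ?s w"
    have e1: "(?q ! i, ?q ! Suc i) \<in> we ?s w" using wl_nth_edge i p by simp
    have e2: "(?q ! j, ?q ! Suc j) \<in> we ?s w" using wl_nth_edge j p by simp
    have "\<not> crZ (?q ! i) (?q ! Suc i) (?q ! j) (?q ! Suc j)" using we_nc[OF vs e1] e2 by blast
    moreover have "crosses (lab n (?q ! i)) (lab n (?q ! Suc i)) (lab n (?q ! j)) (lab n (?q ! Suc j)) = crZ (?q ! i) (?q ! Suc i) (?q ! j) (?q ! Suc j)"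
      by (rule transfer[OF n, of lo]) (use edgewin[OF e1] edgewin[OF e2] in auto)
    moreover have "p ! i = lab n (?q ! i)" "p ! (i+1) = lab n (?q ! Suc i)" "p ! j = lab n (?q ! j)" "p ! (j+1) = lab n (?q ! Suc j)"
      using p i j by auto
    ultimately show ?thesis by simp
  qed
  show "is_shp n (map (lab n) (wl ?s w))"
    unfolding is_shp_def using d st nc by blast
  fix e assume "e \<in> path_edges (map (lab n) (wl ?s w))"
  then obtain i where i: "i + 1 < length (wl ?s w)" and e: "e = {lab n (wl ?s w ! i), lab n (wl ?s w ! (i+1))}"
    unfolding path_edges_def by auto
  show "\<exists>a b. (a,b) \<in> we ?s w \<and> e = {lab n a, lab n b}"
    using wl_nth_edge[of i ?s w] i e by auto
qed

lemma we_lab_ne: assumes n: "n > 0" and len: "length w = n - 1" and ab: "(a,b) \<in> we (v,v,v) w"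
  shows "lab n a \<noteq> lab n b"
proof -
  let ?s = "(v,v,v)"
  have vs: "valid ?s" by (simp add: valid_def)
  obtain lo hi c where f: "fin ?s w = (lo,hi,c)" by (cases "fin ?s w")
  have hl: "hi - lo = int n - 1" using fin_props[OF vs, of w] f len n by auto
  have "lo \<le> a \<and> a \<le> lo + int n - 1 \<and> lo \<le> b \<and> b \<le> lo + int n - 1 \<and> a \<noteq> b"
    using we_window[OF vs ab] f hl by auto
  then show ?thesis using lab_inj[OF n, of lo] unfolding inj_on_def by auto
qed

lemma seg_L_fin: "fin (lo,hi,lo) (replicate k False) = (lo - int k, hi, lo - int k)"
  by (induction k arbitrary: lo) (auto simp: algebra_simps)

lemma seg_L: "(a,b) \<in> we (lo,hi,lo) (replicate k False) \<Longrightarrow> \<exists>t<k. a = lo - int t \<and> b = lo - int t - 1"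
proof (induction k arbitrary: lo)
  case 0 then show ?case by simp
next
  case (Suc k)
  then have "(a,b) = (lo, lo - 1) \<or> (a,b) \<in> we (lo-1,hi,lo-1) (replicate k False)" by simp
  then show ?case
  proof
    assume "(a,b) \<in> we (lo-1,hi,lo-1) (replicate k False)"
    then obtain t where "t < k" "a = lo - 1 - int t" "b = lo - 1 - int t - 1" using Suc.IH by blast
    then show ?thesis by (intro exI[of _ "Suc t"]) auto
  qed auto
qed

lemma seg_R_fin: "fin (lo,hi,hi) (replicate k True) = (lo, hi + int k, hi + int k)"
  by (induction k arbitrary: hi) (auto simp: algebra_simps)

lemma seg_R: "(a,b) \<in> we (lo,hi,hi) (replicate k True) \<Longrightarrow> \<exists>t<k. a = hi + int t \<and> b = hi + int t + 1"
proof (induction k arbitrary: hi)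
  case 0 then show ?case by simp
next
  case (Suc k)
  then have "(a,b) = (hi, hi + 1) \<or> (a,b) \<in> we (lo,hi+1,hi+1) (replicate k True)" by simp
  then show ?case
  proof
    assume "(a,b) \<in> we (lo,hi+1,hi+1) (replicate k True)"
    then obtain t where "t < k" "a = hi + 1 + int t" "b = hi + 1 + int t + 1" using Suc.IH by blast
    then show ?thesis by (intro exI[of _ "Suc t"]) auto
  qed auto
qed

lemma seg_RL_fin: "fin (lo,hi,lo) (concat (replicate k [True,False])) = (lo - int k, hi + int k, lo - int k)"
  by (induction k arbitrary: lo hi) (auto simp: fin_append algebra_simps)

lemma seg_RL: "(a,b) \<in> we (lo,hi,lo) (concat (replicate k [True,False])) \<Longrightarrow>
   \<exists>t<k. (a = lo - int t \<and> b = hi + int t + 1) \<or> (a = hi + int t + 1 \<and> b = lo - int t - 1)"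
proof (induction k arbitrary: lo hi)
  case 0 then show ?case by simp
next
  case (Suc k)
  then have "(a,b) = (lo, hi + 1) \<or> (a,b) = (hi+1, lo - 1) \<or> (a,b) \<in> we (lo-1,hi+1,lo-1) (concat (replicate k [True,False]))"
    by (simp add: we_append)
  then show ?case
  proof (elim disjE)
    assume "(a,b) \<in> we (lo-1,hi+1,lo-1) (concat (replicate k [True,False]))"
    then obtain t where "t < k" "(a = lo - 1 - int t \<and> b = hi + 1 + int t + 1) \<or> (a = hi + 1 + int t + 1 \<and> b = lo - 1 - int t - 1)"
      using Suc.IH by blast
    then show ?thesis by (intro exI[of _ "Suc t"]) auto
  qed auto
qed

lemma seg_LR_fin: "fin (lo,hi,hi) (concat (replicate k [False,True])) = (lo - int k, hi + int k, hi + int k)"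
  by (induction k arbitrary: lo hi) (auto simp: fin_append algebra_simps)

lemma seg_LR: "(a,b) \<in> we (lo,hi,hi) (concat (replicate k [False,True])) \<Longrightarrow>
   \<exists>t<k. (a = hi + int t \<and> b = lo - int t - 1) \<or> (a = lo - int t - 1 \<and> b = hi + int t + 1)"
proof (induction k arbitrary: lo hi)
  case 0 then show ?case by simp
next
  case (Suc k)
  then have "(a,b) = (hi, lo - 1) \<or> (a,b) = (lo - 1, hi + 1) \<or> (a,b) \<in> we (lo-1,hi+1,hi+1) (concat (replicate k [False,True]))"
    by (simp add: we_append)
  then show ?case
  proof (elim disjE)
    assume "(a,b) \<in> we (lo-1,hi+1,hi+1) (concat (replicate k [False,True]))"
    then obtain t where "t < k" "(a = hi + 1 + int t \<and> b = lo - 1 - int t - 1) \<or> (a = lo - 1 - int t - 1 \<and> b = hi + 1 + int t + 1)"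
      using Suc.IH by blast
    then show ?thesis by (intro exI[of _ "Suc t"]) auto
  qed auto
qed

lemma lab_lt: "n > 0 \<Longrightarrow> lab n a < n"
  unfolding lab_def by (simp add: nat_less_iff)
lemma lab_pos: "0 \<le> i \<Longrightarrow> i < int n \<Longrightarrow> lab n i = nat i"
  unfolding lab_def by simp
lemma lab_neg: "- int n \<le> i \<Longrightarrow> i < 0 \<Longrightarrow> lab n i = nat (i + int n)"
proof -
  assume a: "- int n \<le> i" "i < 0"
  have "(i + int n) mod int n = i + int n" by (rule mod_pos_pos_trivial) (use a in auto)
  then have "i mod int n = i + int n" by simp
  then show ?thesis unfolding lab_def by simp
qed
lemma lab_big: "int n \<le> i \<Longrightarrow> i < 2 * int n \<Longrightarrow> lab n i = nat (i - int n)"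
proof -
  assume a: "int n \<le> i" "i < 2 * int n"
  have "(i - int n) mod int n = i - int n" by (rule mod_pos_pos_trivial) (use a in auto)
  moreover have "(i - int n + int n) mod int n = (i - int n) mod int n" by (rule mod_add_self2)
  ultimately have "i mod int n = i - int n" by simp
  then show ?thesis unfolding lab_def by simp
qed
lemma lab_succ: "n > 0 \<Longrightarrow> lab n (i+1) = (lab n i + 1) mod n"
proof -
  assume n: "n > 0"
  have "int ((lab n i + 1) mod n) = (i mod int n + 1) mod int n"
    unfolding lab_def using n by (simp add: zmod_int add.commute)
  also have "\<dots> = (i + 1) mod int n" by (rule mod_add_left_eq)
  finally show ?thesis unfolding lab_def by simp
qed
lemma dir2: "x \<noteq> y \<Longrightarrow> direction n {x,y} = (x+y) mod n"
  unfolding direction_def by simp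
lemma labsum: "n > 0 \<Longrightarrow> (lab n a + lab n b) mod n = nat ((a+b) mod int n)"
proof -
  assume n: "n > 0"
  have "int ((lab n a + lab n b) mod n) = (a mod int n + b mod int n) mod int n"
    unfolding lab_def using n by (simp add: zmod_int add.commute)
  also have "\<dots> = (a + b) mod int n" by (simp add: mod_add_eq)
  finally show ?thesis by simp
qed
lemma img_odd: "(n::nat) = 2*m - 1 \<Longrightarrow> d \<in> (\<lambda>i. (2*i+1) mod n) ` {0..<m} \<Longrightarrow> d = 0 \<or> odd d"
proof -
  assume n: "n = 2*m-1" and "d \<in> (\<lambda>i. (2*i+1) mod n) ` {0..<m}"
  then obtain i where i: "i < m" "d = (2*i+1) mod n" by auto
  show ?thesis
  proof (cases "2*i+1 < n")
    case True then show ?thesis using i by simp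
  next
    case False then have "2*i+1 = n" using i n by auto
    then show ?thesis using i by simp
  qed
qed

lemma core:
  fixes m n \<alpha> \<beta> \<delta> :: nat and B :: "nat set set"
  assumes m2: "m \<ge> 2" and n_def: "n = 2*m - 1"
    and hits: "hits_all_shps n B"
    and dirin: "\<forall>e\<in>B. direction n e \<in> (\<lambda>i. (2*i+1) mod n) ` {0..<m}"
    and inj: "inj_on (direction n) B"
    and delta_lt: "\<delta> < m"
    and first_in: "{\<alpha>, \<alpha>+1} \<in> B"
    and first_min: "\<forall>i<\<alpha>. {i,i+1} \<notin> B"
    and last_max: "\<forall>i. m-\<delta> \<le> i \<and> i < m \<longrightarrow> {i,i+1} \<notin> B"
    and beta_range: "\<alpha>+\<beta> < m-\<delta>"
    and missed: "{\<alpha>+\<beta>, \<alpha>+\<beta>+1} \<notin> B"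
  shows "\<forall>e\<in>B. direction n e \<in> (\<lambda>i. (2*i+1) mod n) ` {0..<\<alpha>} \<longrightarrow> (\<exists>v\<in>e. \<alpha> < v \<and> v < \<alpha>+\<beta>)"
proof -
  have n0: "n > 0" using m2 n_def by auto
  have b1: "\<beta> \<ge> 1" using first_in missed by (cases \<beta>) auto
  have am: "\<alpha> + 2 \<le> m" using beta_range b1 by auto
  have dodd: "e \<in> B \<Longrightarrow> direction n e = 0 \<or> odd (direction n e)" for e
    using dirin img_odd[OF n_def] by blast
  have evenfree: "{lab n a, lab n b} \<notin> B"
    if "lab n a \<noteq> lab n b" "(a+b) mod int n = int ev" "even ev" "ev \<noteq> 0" for a b ev
  proof
    assume inB: "{lab n a, lab n b} \<in> B"
    have "direction n {lab n a, lab n b} = ev"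
      using that dir2 labsum[OF n0] by simp
    then show False using dodd[OF inB] that by auto
  qed
  have bd_free: "{lab n i, lab n (i+1)} \<notin> B"
    if H: "lab n i < \<alpha> \<or> m - \<delta> \<le> lab n i \<or> lab n i = \<alpha>+\<beta>" for i
  proof -
    let ?x = "lab n i"
    have x: "?x < n" using lab_lt[OF n0] .
    have s: "lab n (i+1) = (?x + 1) mod n" using lab_succ[OF n0] .
    consider "?x < \<alpha>" | "?x = \<alpha>+\<beta>" | "m-\<delta> \<le> ?x \<and> ?x < m" | "m \<le> ?x \<and> ?x + 1 < n" | "?x + 1 = n"
      using H x by linarith
    then show ?thesis
    proof cases
      case 1
      then have "lab n (i+1) = ?x + 1" using s am n_def by auto
      then show ?thesis using first_min 1 by simp
    next
      case 2
      have "?x + 1 < n" using 2 beta_range n_def m2 by linarith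
      then have "lab n (i+1) = ?x + 1" using s by auto
      then show ?thesis using missed 2 by simp
    next
      case 3
      have "?x + 1 < n" using 3 n_def m2 by linarith
      then have "lab n (i+1) = ?x + 1" using s by auto
      then show ?thesis using last_max 3 by simp
    next
      case 4
      then have e: "lab n (i+1) = ?x + 1" using s by auto
      show ?thesis
      proof
        assume inB: "{lab n i, lab n (i+1)} \<in> B"
        have "direction n {lab n i, lab n (i+1)} = (2 * ?x + 1) mod n" using e dir2 by (simp add: mult_2)
        also have "\<dots> = 2 * ?x + 1 - n"
        proof -
          have h: "n \<le> 2*?x+1" "2*?x+1 - n < n" using 4 n_def by linarith+
          then have "(2*?x+1) mod n = (2*?x+1-n) mod n" by (simp add: le_mod_geq)
          then show ?thesis using h by simp
        qed
        also have "\<dots> = 2 * (?x - m) + 2" using 4 n_def by linarith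
        finally have d: "direction n {lab n i, lab n (i+1)} = 2 * (?x - m) + 2" .
        show False using dodd[OF inB] unfolding d by simp
      qed
    next
      case 5
      then have e: "lab n (i+1) = 0" using s by auto
      show ?thesis
      proof
        assume inB: "{lab n i, lab n (i+1)} \<in> B"
        have xp: "?x > 0" using 5 n_def m2 by linarith
        have "direction n {lab n i, lab n (i+1)} = ?x" using e dir2[of ?x 0 n] xp x by auto
        then have d: "direction n {lab n i, lab n (i+1)} = 2 * (m - 1)" using 5 n_def by simp
        show False using dodd[OF inB] m2 unfolding d by simp
      qed
    qed
  qed

  have dlt: "2*j+3 < n" if "j < \<alpha>" for j using that am n_def by linarith
  define P where "P j \<longleftrightarrow> (\<forall>e\<in>B. direction n e = 2*j+1 \<longrightarrow> (\<exists>v\<in>e. \<alpha> < v \<and> v < \<alpha>+\<beta>))" for j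
  have step: "P j" if j: "j < \<alpha>" and IH: "j+1 < \<alpha> \<Longrightarrow> P (j+1)" for j
  proof -
    have False if eB: "e \<in> B" and de: "direction n e = 2*j+1" and nv: "\<not>(\<exists>v\<in>e. \<alpha> < v \<and> v < \<alpha>+\<beta>)" for e
    proof -
      define r where "r = 2*\<alpha> - 2*j - 1"
      define \<gamma> where "\<gamma> = m - \<delta> - (\<alpha>+\<beta>) - 1"
      define rest where "rest = 2*\<delta> + 2*j + 1"
      define w where "w = replicate r False @ concat (replicate (\<beta>-1) [True,False]) @ [True,True] @ concat (replicate \<gamma> [False,True]) @ replicate rest True"
      define A where "A = int \<alpha>"
      have ir: "int r = 2*A - 2*int j - 1" using j unfolding r_def A_def by linarith
      have ib: "int (\<beta>-1) = int \<beta> - 1" using b1 by linarith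
      have ig: "int \<gamma> = int m - int \<delta> - A - int \<beta> - 1" using beta_range unfolding \<gamma>_def A_def by linarith
      have iN: "int n = 2 * int m - 1" using n_def m2 by linarith
      have lcr: "length (concat (replicate k xs)) = k * length xs" for k and xs :: "bool list"
        by (induction k) auto
      have len: "length w = n - 1" unfolding w_def using j beta_range b1 n_def
        by (simp add: lcr r_def \<gamma>_def rest_def)
      have shp: "is_shp n (map (lab n) (wl (A,A,A) w))" using walk_shp(1)[OF n0 len] .
      obtain e' where e'1: "e' \<in> path_edges (map (lab n) (wl (A,A,A) w))" and e'B: "e' \<in> B"
        using hits shp unfolding hits_all_shps_def by blast
      obtain a b where ab: "(a,b) \<in> we (A,A,A) w" and e': "e' = {lab n a, lab n b}"
        using walk_shp(2)[OF n0 len e'1] by blast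
      have ne: "lab n a \<noteq> lab n b" using we_lab_ne[OF n0 len ab] .
      define lo2 where "lo2 = A - int r - int (\<beta>-1)"
      define hi2 where "hi2 = A + int (\<beta>-1)"
      define hi3 where "hi3 = hi2 + 2"
      have f1: "fin (A,A,A) (replicate r False) = (A - int r, A, A - int r)" by (simp add: seg_L_fin)
      have f2: "fin (A - int r, A, A - int r) (concat (replicate (\<beta>-1) [True,False])) = (lo2, hi2, lo2)"
        by (simp add: seg_RL_fin lo2_def hi2_def)
      have f3: "fin (lo2, hi2, lo2) [True,True] = (lo2, hi3, hi3)" by (simp add: hi3_def)
      have f4: "fin (lo2, hi3, hi3) (concat (replicate \<gamma> [False,True])) = (lo2 - int \<gamma>, hi3 + int \<gamma>, hi3 + int \<gamma>)"
        by (simp add: seg_LR_fin)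
      have weTT: "we (lo2, hi2, lo2) [True,True] = {(lo2, hi2+1), (hi2+1, hi3)}" by (simp add: hi3_def algebra_simps)
      have decomp: "(a,b) \<in> we (A,A,A) (replicate r False) \<or> (a,b) \<in> we (A - int r, A, A - int r) (concat (replicate (\<beta>-1) [True,False]))
        \<or> (a,b) \<in> we (lo2, hi2, lo2) [True,True] \<or> (a,b) \<in> we (lo2, hi3, hi3) (concat (replicate \<gamma> [False,True]))
        \<or> (a,b) \<in> we (lo2 - int \<gamma>, hi3 + int \<gamma>, hi3 + int \<gamma>) (replicate rest True)"
      proof -
        have "we (A,A,A) w = we (A,A,A) (replicate r False) \<union> (we (A - int r, A, A - int r) (concat (replicate (\<beta>-1) [True,False]))
          \<union> (we (lo2, hi2, lo2) [True,True] \<union> (we (lo2, hi3, hi3) (concat (replicate \<gamma> [False,True]))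
          \<union> we (lo2 - int \<gamma>, hi3 + int \<gamma>, hi3 + int \<gamma>) (replicate rest True))))"
          unfolding w_def by (simp only: we_append fin_append f1 f2 f3 f4)
        then show ?thesis using ab by blast
      qed
      have notB: "{lab n a, lab n b} \<notin> B"
      proof -
        have dirab: "direction n {lab n a, lab n b} = nat ((a+b) mod int n)"
          using ne dir2 labsum[OF n0] by simp
        have evenchord: "{lab n a, lab n b} \<notin> B" if "a + b = 2 * int j + 2"
        proof (rule evenfree[OF ne])
          have "(a+b) mod int n = 2 * int j + 2" using that dlt[OF j] iN by (simp add: mod_pos_pos_trivial)
          then show "(a+b) mod int n = int (2*j+2)" by simp
        qed auto
        have bdc: "{lab n a, lab n b} \<notin> B"
          if "b = a + 1" "lab n a < \<alpha> \<or> m - \<delta> \<le> lab n a \<or> lab n a = \<alpha>+\<beta>"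
          using bd_free[of a] that by simp
        have bdc2: "{lab n a, lab n b} \<notin> B"
          if "a = b + 1" "lab n b < \<alpha> \<or> m - \<delta> \<le> lab n b \<or> lab n b = \<alpha>+\<beta>"
          using bd_free[of b] that by (simp add: insert_commute)
        from decomp show ?thesis
        proof (elim disjE)
          assume "(a,b) \<in> we (A,A,A) (replicate r False)"
          then obtain t where t: "t < r" "a = A - int t" "b = A - int t - 1" using seg_L by blast
          show ?thesis
          proof (rule bdc2)
            show "a = b + 1" using t by simp
            show "lab n b < \<alpha> \<or> m - \<delta> \<le> lab n b \<or> lab n b = \<alpha>+\<beta>"
            proof (cases "b \<ge> 0")
              case True
              then have "lab n b = nat b" using lab_pos[of b n] t iN A_def am by simp
              then show ?thesis using t True A_def by (simp add: nat_less_iff)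
            next
              case False
              then have "lab n b = nat (b + int n)" using lab_neg[of n b] t ir iN A_def am by simp
              then have "int (lab n b) = b + int n" using t ir iN A_def am by simp
              then have "m - \<delta> \<le> lab n b" using t ir iN A_def False am delta_lt by linarith
              then show ?thesis by simp
            qed
          qed
        next
          assume "(a,b) \<in> we (A - int r, A, A - int r) (concat (replicate (\<beta>-1) [True,False]))"
          then obtain t where t: "t < \<beta> - 1" and
            c: "(a = A - int r - int t \<and> b = A + int t + 1) \<or> (a = A + int t + 1 \<and> b = A - int r - int t - 1)"
            using seg_RL by blast
          from c show ?thesis
          proof (elim disjE conjE)
            assume "a = A - int r - int t" "b = A + int t + 1"
            then show ?thesis using evenchord ir by simp
          next
            assume a: "a = A + int t + 1" and b: "b = A - int r - int t - 1"
            show ?thesis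
            proof
              assume inB: "{lab n a, lab n b} \<in> B"
              have "(a+b) mod int n = 2 * int j + 1" using a b ir dlt[OF j] iN by (simp add: mod_pos_pos_trivial)
              then have "direction n {lab n a, lab n b} = direction n e" using dirab de by simp
              then have "{lab n a, lab n b} = e" using inj inB eB unfolding inj_on_def by blast
              moreover have "lab n a = \<alpha> + t + 1" using lab_pos[of a n] a A_def t iN beta_range by simp
              ultimately show False using nv t by auto
            qed
          qed
        next
          assume "(a,b) \<in> we (lo2, hi2, lo2) [True,True]"
          then have "(a,b) = (lo2, hi2+1) \<or> (a,b) = (hi2+1, hi3)" using weTT by blast
          then show ?thesis
          proof (elim disjE)
            assume "(a,b) = (lo2, hi2+1)"
            then show ?thesis using evenchord ir ib lo2_def hi2_def by simp
          next
            assume ab2: "(a,b) = (hi2+1, hi3)"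
            show ?thesis
            proof (rule bdc)
              show "b = a + 1" using ab2 hi3_def by simp
              have "a = int (\<alpha>+\<beta>)" using ab2 hi2_def ib A_def by simp
              then have "lab n a = \<alpha> + \<beta>" using lab_pos[of a n] iN beta_range by simp
              then show "lab n a < \<alpha> \<or> m - \<delta> \<le> lab n a \<or> lab n a = \<alpha>+\<beta>" by simp
            qed
          qed
        next
          assume "(a,b) \<in> we (lo2, hi3, hi3) (concat (replicate \<gamma> [False,True]))"
          then obtain t where t: "t < \<gamma>" and
            c: "(a = hi3 + int t \<and> b = lo2 - int t - 1) \<or> (a = lo2 - int t - 1 \<and> b = hi3 + int t + 1)"
            using seg_LR by blast
          from c show ?thesis
          proof (elim disjE conjE)
            assume "a = hi3 + int t" "b = lo2 - int t - 1"
            then show ?thesis using evenchord ir ib lo2_def hi2_def hi3_def by simp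
          next
            assume a: "a = lo2 - int t - 1" and b: "b = hi3 + int t + 1"
            have ib2: "b = int (\<alpha> + \<beta> + 2 + t)" using b hi3_def hi2_def ib A_def by simp
            have lb: "lab n b = \<alpha> + \<beta> + 2 + t" using lab_pos[of b n] ib2 t ig iN A_def by simp
            have la: "lab n a < \<alpha> \<or> lab n a > \<alpha> + \<beta>"
            proof (cases "a \<ge> 0")
              case True
              then have "lab n a = nat a" using lab_pos[of a n] a lo2_def ir ib iN A_def am by simp
              then have "int (lab n a) = a" using True by simp
              then show ?thesis using a lo2_def ir ib A_def True b1 by linarith
            next
              case False
              have "- int n \<le> a" using a lo2_def ir ib ig t iN A_def by simp
              then have "lab n a = nat (a + int n)" using lab_neg[of n a] False by simp
              then have "int (lab n a) = a + int n" using \<open>- int n \<le> a\<close> by simp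
              then show ?thesis using a lo2_def ir ib ig t iN A_def False beta_range by linarith
            qed
            show ?thesis
            proof
              assume inB: "{lab n a, lab n b} \<in> B"
              have "(a+b) mod int n = 2 * int j + 3" using a b lo2_def hi3_def hi2_def ir ib dlt[OF j] iN
                by (simp add: mod_pos_pos_trivial)
              then have dd: "direction n {lab n a, lab n b} = 2*(j+1)+1" using dirab by simp
              show False
              proof (cases "j + 1 < \<alpha>")
                case True
                then have "P (j+1)" using IH by simp
                then obtain v where "v \<in> {lab n a, lab n b}" "\<alpha> < v" "v < \<alpha>+\<beta>"
                  using inB dd unfolding P_def by blast
                then show False using la lb by auto
              next
                case False
                then have ja: "j + 1 = \<alpha>" using j by simp
                have "direction n {\<alpha>, \<alpha>+1} = 2*\<alpha>+1" using dir2[of \<alpha> "\<alpha>+1" n] dlt[OF j] ja by simp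
                then have "direction n {lab n a, lab n b} = direction n {\<alpha>, \<alpha>+1}" using dd ja by simp
                then have "{lab n a, lab n b} = {\<alpha>, \<alpha>+1}" using inj inB first_in unfolding inj_on_def by blast
                then show False using lb by (auto simp: doubleton_eq_iff)
              qed
            qed
          qed
        next
          assume "(a,b) \<in> we (lo2 - int \<gamma>, hi3 + int \<gamma>, hi3 + int \<gamma>) (replicate rest True)"
          then obtain t where t: "t < rest" "a = hi3 + int \<gamma> + int t" "b = hi3 + int \<gamma> + int t + 1"
            using seg_R by blast
          have aa: "a = int m - int \<delta> + int t" using t hi3_def hi2_def ib ig A_def by simp
          show ?thesis
          proof (rule bdc)
            show "b = a + 1" using t by simp
            show "lab n a < \<alpha> \<or> m - \<delta> \<le> lab n a \<or> lab n a = \<alpha>+\<beta>"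
            proof (cases "a < int n")
              case True
              have "0 \<le> a" using aa delta_lt by linarith
              then have "lab n a = nat a" using lab_pos[of a n] True by simp
              then have "int (lab n a) = a" using \<open>0 \<le> a\<close> by simp
              then have "m - \<delta> \<le> lab n a" using aa delta_lt by linarith
              then show ?thesis by simp
            next
              case False
              have "a < 2 * int n" using aa t rest_def iN delta_lt j am by simp
              then have "lab n a = nat (a - int n)" using lab_big[of n a] False by simp
              then have "int (lab n a) = a - int n" using False by simp
              then have "lab n a < \<alpha>" using aa t rest_def iN j beta_range False by linarith
              then show ?thesis by simp
            qed
          qed
        qed
      qed
      show False using notB e' e'B by simp
    qed
    then show ?thesis unfolding P_def by blast
  qed
  have allP: "P (\<alpha> - 1 - k)" if "k < \<alpha>" for k
    using that
  proof (induction k)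
    case 0 then show ?case using step[of "\<alpha> - 1"] by simp
  next
    case (Suc k)
    then have "P (\<alpha> - 1 - k)" by simp
    moreover have "\<alpha> - 1 - Suc k + 1 = \<alpha> - 1 - k" using Suc.prems by simp
    ultimately show ?case using step[of "\<alpha> - 1 - Suc k"] Suc.prems by simp
  qed
  show ?thesis
  proof (intro ballI impI)
    fix e assume eB: "e \<in> B" and d: "direction n e \<in> (\<lambda>i. (2*i+1) mod n) ` {0..<\<alpha>}"
    then obtain j where jj: "j < \<alpha>" "direction n e = (2*j+1) mod n" by auto
    have "(2*j+1) mod n = 2*j+1" using dlt[OF jj(1)] by simp
    then have "direction n e = 2*j+1" using jj by simp
    moreover have "P j" using allP[of "\<alpha> - 1 - j"] jj by simp
    ultimately show "\<exists>v\<in>e. \<alpha> < v \<and> v < \<alpha>+\<beta>" using eB unfolding P_def by blast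
  qed
qed

definition rf :: "nat \<Rightarrow> nat \<Rightarrow> nat \<Rightarrow> nat" where "rf m n x = (m + n - x) mod n"

lemma crZ_neg: "crZ (-a) (-b) (-c) (-d) = crZ a b c d"
  unfolding crZ_def by (auto simp: min_def max_def)

lemma crosses_neg:
  assumes "a < n" "b < n" "c < n" "d < n"
  shows "crosses (n-1-a) (n-1-b) (n-1-c) (n-1-d) = crosses a b c d"
proof -
  have "crosses (n-1-a) (n-1-b) (n-1-c) (n-1-d) = crZ (int n - 1 - int a) (int n - 1 - int b) (int n - 1 - int c) (int n - 1 - int d)"
    using assms by (simp add: crosses_int of_nat_diff algebra_simps)
  also have "\<dots> = crZ (- int a) (- int b) (- int c) (- int d)"
    using crZ_trans[of "- int a" "int n - 1" "- int b" "- int c" "- int d"] by simp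
  also have "\<dots> = crosses a b c d" by (simp add: crZ_neg crosses_int)
  finally show ?thesis .
qed

lemma rf_alt: "x < n \<Longrightarrow> rf m n x = ((n - 1 - x) + (m + 1)) mod n"
proof -
  assume "x < n"
  then have e: "n - 1 - x + (m + 1) = m + n - x" by arith
  show ?thesis unfolding rf_def e ..
qed

lemma rf_lt: "n > 0 \<Longrightarrow> rf m n x < n" unfolding rf_def by simp

lemma crosses_rf:
  assumes "a < n" "b < n" "c < n" "d < n"
  shows "crosses (rf m n a) (rf m n b) (rf m n c) (rf m n d) = crosses a b c d"
  using rotk[of "n-1-a" n "n-1-b" "n-1-c" "n-1-d" "m+1"] crosses_neg[OF assms] assms
  by (simp add: rf_alt)

lemma rf_int: "z < n \<Longrightarrow> int (rf m n z) = (int m - int z) mod int n"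
proof -
  assume z: "z < n"
  have "int (rf m n z) = (int m + int n - int z) mod int n"
    unfolding rf_def using z by (simp add: zmod_int of_nat_diff)
  moreover have "int m + int n - int z = (int m - int z) + int n" by simp
  ultimately show ?thesis by (simp only: mod_add_self2)
qed

lemma rf_invol:
  assumes "x < n" "m < n"
  shows "rf m n (rf m n x) = x"
proof -
  have n0: "n > 0" using assms by auto
  have "int (rf m n (rf m n x)) = (int m - int (rf m n x)) mod int n" using rf_int rf_lt[OF n0] by blast
  also have "\<dots> = (int m - (int m - int x) mod int n) mod int n" using rf_int[OF assms(1)] by simp
  also have "\<dots> = (int m - (int m - int x)) mod int n" by (simp add: mod_diff_right_eq)
  also have "\<dots> = int x" using assms by simp
  finally show ?thesis by simp
qed

lemma rf_inj: "m < n \<Longrightarrow> inj_on (rf m n) {0..<n}"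
  by (rule inj_onI) (metis atLeastLessThan_iff rf_invol)

lemma rf_img: "m < n \<Longrightarrow> rf m n ` {0..<n} = {0..<n}"
proof -
  assume mn: "m < n"
  have "rf m n ` {0..<n} \<subseteq> {0..<n}" using rf_lt mn by auto
  moreover have "{0..<n} \<subseteq> rf m n ` {0..<n}"
  proof
    fix x assume "x \<in> {0..<n}"
    then have "x = rf m n (rf m n x)" "rf m n x \<in> {0..<n}" using rf_invol mn rf_lt by auto
    then show "x \<in> rf m n ` {0..<n}" by blast
  qed
  ultimately show ?thesis by blast
qed

lemma shp_rf:
  assumes mn: "m < n" and p: "is_shp n p"
  shows "is_shp n (map (rf m n) p)"
proof -
  have d: "distinct p" and s: "set p = {0..<n}" using p unfolding is_shp_def by auto
  have lt: "i < length p \<Longrightarrow> p ! i < n" for i using s nth_mem by fastforce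
  have "distinct (map (rf m n) p)" using d s rf_inj[OF mn] by (simp add: distinct_map)
  moreover have "set (map (rf m n) p) = {0..<n}" using s rf_img[OF mn] by simp
  moreover have "\<not> crosses (map (rf m n) p ! i) (map (rf m n) p ! (i + 1)) (map (rf m n) p ! j) (map (rf m n) p ! (j + 1))"
    if "i + 1 < length (map (rf m n) p)" "j + 1 < length (map (rf m n) p)" for i j
  proof -
    have "\<not> crosses (p ! i) (p ! (i + 1)) (p ! j) (p ! (j + 1))" using p that unfolding is_shp_def by auto
    then show ?thesis using that crosses_rf lt by simp
  qed
  ultimately show ?thesis unfolding is_shp_def by blast
qed

lemma hits_rf:
  assumes mn: "m < n" and h: "hits_all_shps n B"
  shows "hits_all_shps n ((\<lambda>e. rf m n ` e) ` B)"
  unfolding hits_all_shps_def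
proof (intro allI impI)
  fix p assume p: "is_shp n p"
  have s: "set p = {0..<n}" using p unfolding is_shp_def by auto
  have lt: "i < length p \<Longrightarrow> p ! i < n" for i using s nth_mem by fastforce
  have "path_edges (map (rf m n) p) \<inter> B \<noteq> {}" using h shp_rf[OF mn p] unfolding hits_all_shps_def by blast
  then obtain i where i: "i + 1 < length p" and inB: "{rf m n (p ! i), rf m n (p ! (i+1))} \<in> B"
    unfolding path_edges_def by auto
  have "rf m n ` {rf m n (p ! i), rf m n (p ! (i+1))} = {p ! i, p ! (i+1)}"
    using rf_invol[OF _ mn] lt i by simp
  then have "{p ! i, p ! (i+1)} \<in> (\<lambda>e. rf m n ` e) ` B" using inB by (metis image_eqI)
  moreover have "{p ! i, p ! (i+1)} \<in> path_edges p" using i unfolding path_edges_def by auto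
  ultimately show "path_edges p \<inter> (\<lambda>e. rf m n ` e) ` B \<noteq> {}" by blast
qed

lemma rf_small: "k \<le> m \<Longrightarrow> m < n \<Longrightarrow> rf m n k = m - k"
proof -
  assume a: "k \<le> m" "m < n"
  have "int (rf m n k) = (int m - int k) mod int n" using rf_int a by simp
  also have "\<dots> = int m - int k" using a by (simp add: mod_pos_pos_trivial)
  finally show ?thesis using a by simp
qed

lemma ck_pair: "e \<in> ck_edges n \<Longrightarrow> \<exists>x y. e = {x,y} \<and> x \<noteq> y \<and> x < n \<and> y < n"
  unfolding ck_edges_def by auto

lemma dir_rf:
  assumes e: "e \<in> ck_edges n" and mn: "m < n" and n: "n = 2*m - 1"
  shows "int (direction n (rf m n ` e)) = (1 - int (direction n e)) mod int n"
proof -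
  obtain x y where xy: "e = {x,y}" "x \<noteq> y" "x < n" "y < n" using ck_pair[OF e] by blast
  have ne: "rf m n x \<noteq> rf m n y" using rf_invol[OF _ mn] xy by metis
  have n0: "n > 0" using mn by auto
  have "int (direction n (rf m n ` e)) = int ((rf m n x + rf m n y) mod n)"
    using xy ne dir2 by simp
  also have "\<dots> = (int (rf m n x) + int (rf m n y)) mod int n" by (simp add: zmod_int)
  also have "\<dots> = ((int m - int x) mod int n + (int m - int y) mod int n) mod int n"
    using rf_int xy by simp
  also have "\<dots> = (2 * int m - (int x + int y)) mod int n" by (simp add: mod_add_eq algebra_simps)
  also have "\<dots> = (1 - (int x + int y) + int n) mod int n" using n mn by (simp add: algebra_simps of_nat_diff)
  also have "\<dots> = (1 - (int x + int y)) mod int n" by simp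
  also have "\<dots> = (1 - (int x + int y) mod int n) mod int n" by (simp add: mod_diff_right_eq)
  also have "\<dots> = (1 - int (direction n e)) mod int n" using xy dir2 by (simp add: zmod_int)
  finally show ?thesis .
qed

lemma rf_rf_set: "e \<subseteq> {0..<n} \<Longrightarrow> m < n \<Longrightarrow> rf m n ` (rf m n ` e) = e"
proof -
  assume a: "e \<subseteq> {0..<n}" "m < n"
  have "rf m n ` (rf m n ` e) = (\<lambda>x. rf m n (rf m n x)) ` e" by (simp add: image_image)
  also have "\<dots> = (\<lambda>x. x) ` e"
  proof (rule image_cong[OF refl])
    fix x assume "x \<in> e"
    then show "rf m n (rf m n x) = x" using a rf_invol by auto
  qed
  also have "\<dots> = e" by simp
  finally show ?thesis by simp
qed

theorem proposition7:
  fixes m n \<alpha> \<beta> \<delta> :: nat and B :: "nat set set"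
  assumes m2: "m \<ge> 2"
    and n_def: "n = 2 * m - 1"
    and blocker: "is_blocker n B"
    and cardB: "card B = m"
    and dirs: "bij_betw (direction n) B ((\<lambda>i. (2 * i + 1) mod n) ` {0..<m})"
    and delta_lt: "\<delta> < m"
    and first_in: "{\<alpha>, \<alpha> + 1} \<in> B"
    and first_min: "\<forall>i<\<alpha>. {i, i + 1} \<notin> B"
    and last_in: "{m - \<delta> - 1, m - \<delta>} \<in> B"
    and last_max: "\<forall>i. m - \<delta> \<le> i \<and> i < m \<longrightarrow> {i, i + 1} \<notin> B"
    and beta_range: "\<alpha> + \<beta> < m - \<delta>"
    and missed: "{\<alpha> + \<beta>, \<alpha> + \<beta> + 1} \<notin> B"
    and others: "\<forall>i. \<alpha> \<le> i \<and> i < m - \<delta> \<and> i \<noteq> \<alpha> + \<beta> \<longrightarrow> {i, i + 1} \<in> B"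
  shows "(\<forall>e\<in>B. direction n e \<in> (\<lambda>i. (2 * i + 1) mod n) ` {0..<\<alpha>} \<longrightarrow>
            (\<exists>v\<in>e. \<alpha> < v \<and> v < \<alpha> + \<beta>))
       \<and> (\<forall>e\<in>B. direction n e \<in> (\<lambda>i. (2 * i + 1) mod n) ` {m - \<delta>..<m} \<longrightarrow>
            (\<exists>v\<in>e. \<alpha> + \<beta> + 1 < v \<and> v < m - \<delta>))"
proof
  have hits: "hits_all_shps n B" and Bsub: "B \<subseteq> ck_edges n" using blocker unfolding is_blocker_def by auto
  have inj: "inj_on (direction n) B" using dirs by (simp add: bij_betw_def)
  have dirin: "\<forall>e\<in>B. direction n e \<in> (\<lambda>i. (2*i+1) mod n) ` {0..<m}" using dirs by (auto simp: bij_betw_def)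
  show "\<forall>e\<in>B. direction n e \<in> (\<lambda>i. (2 * i + 1) mod n) ` {0..<\<alpha>} \<longrightarrow> (\<exists>v\<in>e. \<alpha> < v \<and> v < \<alpha> + \<beta>)"
    using core[OF m2 n_def hits dirin inj delta_lt first_in first_min last_max beta_range missed] .
  \<comment> \<open>second part via reflection\<close>
  have mn: "m < n" using m2 n_def by auto
  have n0: "n > 0" using mn by auto
  define R where "R = rf m n"
  define B' where "B' = (\<lambda>e. R ` e) ` B"
  define c where "c = \<alpha> + \<beta>"
  define \<beta>' where "\<beta>' = m - \<delta> - c - 1"
  have esub: "e \<subseteq> {0..<n}" if "e \<in> B" for e using Bsub that ck_pair by fastforce
  have RR: "R ` (R ` e) = e" if "e \<in> B" for e using rf_rf_set[OF esub[OF that] mn] unfolding R_def .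
  have bk: "e \<in> B" if H1: "R ` e \<in> B'" and H2: "e \<subseteq> {0..<n}" for e
  proof -
    obtain e0 where e0: "e0 \<in> B" "R ` e = R ` e0" using H1 unfolding B'_def by auto
    have "e = R ` (R ` e)" using rf_rf_set[OF H2 mn] unfolding R_def by simp
    also have "\<dots> = e0" using e0 RR by simp
    finally show ?thesis using e0 by simp
  qed
  have Rs: "R k = m - k" if "k \<le> m" for k using rf_small[OF that mn] unfolding R_def .
  have hits': "hits_all_shps n B'" using hits_rf[OF mn hits] unfolding B'_def R_def .
  have dirR: "int (direction n (R ` e)) = (1 - int (direction n e)) mod int n" if "e \<in> B" for e
    using dir_rf[OF _ mn n_def] Bsub that unfolding R_def by auto
  have dlt: "direction n e < n" for e unfolding direction_def using n0 by simp
  have Dmap: "int ((2 * (m - 1 - i) + 1) mod n) = (1 - int ((2*i+1) mod n)) mod int n" if "i < m" for i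
  proof -
    have "int ((2 * (m - 1 - i) + 1) mod n) = (int (2 * (m - 1 - i) + 1)) mod int n" by (simp add: zmod_int)
    also have "\<dots> = (1 - int (2*i+1) + int n) mod int n" using that n_def by (simp add: of_nat_diff algebra_simps)
    also have "\<dots> = (1 - int (2*i+1)) mod int n" by simp
    also have "\<dots> = (1 - int ((2*i+1) mod n)) mod int n" by (simp add: mod_diff_right_eq zmod_int)
    finally show ?thesis .
  qed
  have dirin': "\<forall>e\<in>B'. direction n e \<in> (\<lambda>i. (2*i+1) mod n) ` {0..<m}"
  proof
    fix e' assume "e' \<in> B'"
    then obtain e where e: "e \<in> B" "e' = R ` e" unfolding B'_def by auto
    obtain i where i: "i < m" "direction n e = (2*i+1) mod n" using dirin e by auto
    have "int (direction n e') = int ((2 * (m - 1 - i) + 1) mod n)" using dirR[OF e(1)] e i Dmap by simp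
    then show "direction n e' \<in> (\<lambda>i. (2*i+1) mod n) ` {0..<m}" using i by auto
  qed
  have inj': "inj_on (direction n) B'"
  proof (rule inj_onI)
    fix x y assume x: "x \<in> B'" and y: "y \<in> B'" and d: "direction n x = direction n y"
    obtain ex where ex: "ex \<in> B" "x = R ` ex" using x unfolding B'_def by auto
    obtain ey where ey: "ey \<in> B" "y = R ` ey" using y unfolding B'_def by auto
    have "(1 - int (direction n ex)) mod int n = (1 - int (direction n ey)) mod int n"
      using dirR ex ey d by metis
    then have eq: "(1 - (1 - int (direction n ex)) mod int n) mod int n = (1 - (1 - int (direction n ey)) mod int n) mod int n"
      by simp
    have "int (direction n ex) = int (direction n ex) mod int n" using dlt[of ex] by simp
    also have "\<dots> = (1 - (1 - int (direction n ex)) mod int n) mod int n" by (simp add: mod_diff_right_eq)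
    also have "\<dots> = (1 - (1 - int (direction n ey)) mod int n) mod int n" using eq .
    also have "\<dots> = int (direction n ey) mod int n" by (simp add: mod_diff_right_eq)
    also have "\<dots> = int (direction n ey)" using dlt[of ey] by simp
    finally have "int (direction n ex) = int (direction n ey)" .
    then have "direction n ex = direction n ey" by simp
    then have "ex = ey" using inj ex ey unfolding inj_on_def by blast
    then show "x = y" using ex ey by simp
  qed
  have alt: "\<alpha> < m" using beta_range by auto
  have first_in': "{\<delta>, \<delta> + 1} \<in> B'"
  proof -
    have "R ` {m - \<delta> - 1, m - \<delta>} = {\<delta> + 1, \<delta>}" using Rs delta_lt by auto
    then show ?thesis using last_in unfolding B'_def by (metis image_eqI insert_commute)
  qed
  have first_min': "\<forall>i<\<delta>. {i, i + 1} \<notin> B'"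
  proof (intro allI impI notI)
    fix i assume i: "i < \<delta>" and inB: "{i, i+1} \<in> B'"
    have RS: "R ` {m - i - 1, m - i} = {i, i+1}" using Rs i delta_lt by auto
    have sub: "{m - i - 1, m - i} \<subseteq> {0..<n}" using n_def m2 by auto
    have "{m - i - 1, m - i} \<in> B" by (rule bk[OF _ sub]) (use RS inB in simp)
    moreover have "m - \<delta> \<le> m - i - 1" "m - i - 1 < m" "m - i - 1 + 1 = m - i" using i delta_lt by arith+
    ultimately show False using last_max[rule_format, of "m - i - 1"] by simp
  qed
  have last_max': "\<forall>i. m - \<alpha> \<le> i \<and> i < m \<longrightarrow> {i, i + 1} \<notin> B'"
  proof (intro allI impI notI)
    fix i assume i: "m - \<alpha> \<le> i \<and> i < m" and inB: "{i, i+1} \<in> B'"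
    have RS: "R ` {m - i - 1, m - i} = {i, i+1}" using Rs i by auto
    have sub: "{m - i - 1, m - i} \<subseteq> {0..<n}" using n_def m2 by auto
    have "{m - i - 1, m - i} \<in> B" by (rule bk[OF _ sub]) (use RS inB in simp)
    moreover have "m - i - 1 < \<alpha>" "m - i - 1 + 1 = m - i" using i alt by arith+
    ultimately show False using first_min[rule_format, of "m - i - 1"] by simp
  qed
  have beta_range': "\<delta> + \<beta>' < m - \<alpha>" using beta_range unfolding \<beta>'_def c_def by linarith
  have missed': "{\<delta> + \<beta>', \<delta> + \<beta>' + 1} \<notin> B'"
  proof
    assume inB: "{\<delta> + \<beta>', \<delta> + \<beta>' + 1} \<in> B'"
    have e1: "\<delta> + \<beta>' = m - c - 1" using beta_range unfolding \<beta>'_def c_def by linarith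
    have RS: "R ` {c, c + 1} = {\<delta> + \<beta>', \<delta> + \<beta>' + 1}" using Rs e1 beta_range unfolding c_def by auto
    have sub: "{c, c+1} \<subseteq> {0..<n}" using n_def m2 beta_range unfolding c_def by auto
    have "{c, c+1} \<in> B" by (rule bk[OF _ sub]) (use RS inB in simp)
    then show False using missed unfolding c_def by simp
  qed
  have C: "\<forall>e\<in>B'. direction n e \<in> (\<lambda>i. (2*i+1) mod n) ` {0..<\<delta>} \<longrightarrow> (\<exists>v\<in>e. \<delta> < v \<and> v < \<delta>+\<beta>')"
    using core[OF m2 n_def hits' dirin' inj' alt first_in' first_min' last_max' beta_range' missed'] .
  show "\<forall>e\<in>B. direction n e \<in> (\<lambda>i. (2 * i + 1) mod n) ` {m - \<delta>..<m} \<longrightarrow> (\<exists>v\<in>e. \<alpha> + \<beta> + 1 < v \<and> v < m - \<delta>)"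
  proof (intro ballI impI)
    fix e assume eB: "e \<in> B" and d: "direction n e \<in> (\<lambda>i. (2 * i + 1) mod n) ` {m - \<delta>..<m}"
    then obtain i where i: "m - \<delta> \<le> i" "i < m" "direction n e = (2*i+1) mod n" by auto
    have "int (direction n (R ` e)) = int ((2 * (m - 1 - i) + 1) mod n)" using dirR[OF eB] i Dmap by simp
    then have "direction n (R ` e) \<in> (\<lambda>i. (2*i+1) mod n) ` {0..<\<delta>}" using i by auto
    moreover have "R ` e \<in> B'" using eB unfolding B'_def by auto
    ultimately obtain v where v: "v \<in> R ` e" "\<delta> < v" "v < \<delta> + \<beta>'" using C by blast
    then obtain u where u: "u \<in> e" "v = R u" by auto
    have un: "u < n" using esub[OF eB] u by auto
    have iv: "int v = (int m - int u) mod int n" using rf_int[OF un] u unfolding R_def by simp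
    show "\<exists>v\<in>e. \<alpha> + \<beta> + 1 < v \<and> v < m - \<delta>"
    proof (cases "u \<le> m")
      case True
      then have "v = m - u" using Rs u by simp
      then show ?thesis using u v beta_range True unfolding \<beta>'_def c_def by (intro bexI[of _ u]) auto
    next
      case False
      have h: "(int m - int u + int n) mod int n = int m - int u + int n"
        by (rule mod_pos_pos_trivial) (use False un in auto)
      then have "int v = int m - int u + int n" using iv by simp
      then show ?thesis using v False un beta_range unfolding \<beta>'_def c_def by linarith
    qed
  qed
qed


end
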